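(* Let $A \in \mathbb{R}^{n\times d}$, $b\in\mathbb{R}^n$, and suppose $Ax=b$ admits a solution $x^*$ (not necessarily unique). Let $w$ be a random variable in $\mathbb{R}^n$, $\mathcal{N}(w) = \mathrm{span}\lbrace z \in \mathbb{R}^d : \mathbb{P}[z'A'w=0]=1\rbrace$, $\mathcal{R}(w) = \mathcal{N}(w)^\perp$. Let $\lbrace w_\ell : \ell \geq 0\rbrace$ be random variables in $\mathbb{R}^n$ with $\mathbb{P}[A'w_\ell \in \mathcal{R}(w)] = 1$ for all $\ell$. Let $x_0 \in \mathbb{R}^d$ be arbitrary and $$x_{k+1} = x_k + \frac{A'w_k w_k'(b - Ax_k)}{\|A'w_k\|_2^2}, \quad k \geq 0.$$ Define stopping times $\tau_0 = 0$, $\tau_1 = \min\lbrace k\geq 0 : \mathrm{span}\lbrace A'w_0,\ldots,A'w_k\rbrace = \mathcal{R}(w)\rbrace$, and for $\ell \geq 2$, $\tau_\ell = \min\lbrace k > \tau_{\ell-1} : \mathrm{span}\lbrace A'w_{\tau_{\ell-1}+1},\ldots,A'w_k\rbrace = \mathcal{R}(w)\rbrace$ if $\tau_{\ell-1}<\infty$, and $\tau_\ell = \infty$ otherwise. When the stopping times are finite, let $\mathcal{F}_\ell$ ($\ell\in\mathbb{N}$) be the set of matrices $F$ whose columns form a maximal linearly independent subset of $\lbrace A'w_{\tau_{\ell-1}+1}/\|A'w_{\tau_{\ell-1}+1}\|_2, \ldots, A'w_{\tau_\ell}/\|A'w_{\tau_\ell}\|_2\rbrace$, and $\gamma_\ell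 = 1 - \min_{F\in\mathcal{F}_\ell}\det(F'F)$. Then $\gamma_\ell \in [0,1)$ and, for any $\ell$, on the event $\lbrace\tau_\ell<\infty\rbrace$, $$\|x_{\tau_\ell+1} - x^* - P_{\mathcal{N}(w)}(x_0 - x^* )\|_2^2 \leq \Big(\prod_{j=1}^\ell \gamma_j\Big) \|P_{\mathcal{R}(w)}(x_0 - x^* )\|_2^2.$$ Therefore, for any $k$, $$\|x_k - x^* - P_{\mathcal{N}(w)}(x_0 - x^* )\|_2^2 \leq \Big(\prod_{j=1}^{L(k)} \gamma_j\Big)\|P_{\mathcal{R}(w)}(x_0 - x^* )\|_2^2,$$ where $L(k) = \max\lbrace \ell : k \geq \tau_\ell + 1\rbrace$, on the event $\lbrace \tau_{L(k)} < \infty\rbrace$.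
   Context: $P_W$ denotes the orthogonal projection onto a subspace $W$; $A'$ is the transpose. The iteration presupposes $A'w_k \neq 0$ so that it is defined. *)

theory Defs
  imports "HOL-Probability.Probability"
begin

definition orth_comp :: "'a::real_inner set \<Rightarrow> 'a set" where
  "orth_comp W = {y. \<forall>z\<in>W. y \<bullet> z = 0}"

definition oproj :: "'a::real_inner set \<Rightarrow> 'a \<Rightarrow> 'a" where
  "oproj W v = (THE u. u \<in> W \<and> (\<forall>z\<in>W. (v - u) \<bullet> z = 0))"

definition Nsp :: "'o measure \<Rightarrow> real^'d^'n \<Rightarrow> ('o \<Rightarrow> real^'n) \<Rightarrow> (real^'d) set" where
  "Nsp M A w = span {z. measure M {\<omega> \<in> space M. z \<bullet> (transpose A *v w \<omega>) = 0} = 1}"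

definition Rsp :: "'o measure \<Rightarrow> real^'d^'n \<Rightarrow> ('o \<Rightarrow> real^'n) \<Rightarrow> (real^'d) set" where
  "Rsp M A w = orth_comp (Nsp M A w)"

primrec kacz :: "real^'d^'n \<Rightarrow> real^'n \<Rightarrow> (nat \<Rightarrow> real^'n) \<Rightarrow> real^'d \<Rightarrow> nat \<Rightarrow> real^'d" where
  "kacz A b u x0 0 = x0"
| "kacz A b u x0 (Suc k) = kacz A b u x0 k +
     ((u k \<bullet> (b - A *v kacz A b u x0 k)) / (norm (transpose A *v u k))\<^sup>2) *\<^sub>R (transpose A *v u k)"

text \<open>Stopping times along a realised sequence v (v k = A' w_k), relative to a subspace R.
  tau 0 = 0; tau 1 = min{k \<ge> 0 : span{v 0..v k} = R};
  tau (l+1) = min{k > tau l : span{v (tau l + 1) .. v k} = R} for l \<ge> 1 (\<infinity> if empty or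
  if tau l = \<infinity>).\<close>
primrec tau :: "(nat \<Rightarrow> 'a::real_vector) \<Rightarrow> 'a set \<Rightarrow> nat \<Rightarrow> enat" where
  "tau v R 0 = 0"
| "tau v R (Suc l) =
     (case tau v R l of
        \<infinity> \<Rightarrow> \<infinity>
      | enat t \<Rightarrow>
          (let s = (if l = 0 then 0 else t + 1) in
           if (\<exists>k\<ge>s. span (v ` {s..k}) = R)
           then enat (LEAST k. s \<le> k \<and> span (v ` {s..k}) = R)
           else \<infinity>))"

text \<open>First index of the l-th block (l \<ge> 1): tau (l-1) + 1, with the block for l = 1 starting
  at index 0 (consistent with the definition of tau 1).\<close>
definition block_start :: "(nat \<Rightarrow> 'a::real_vector) \<Rightarrow> 'a set \<Rightarrow> nat \<Rightarrow> nat" where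
  "block_start v R l = (if l \<le> 1 then 0 else the_enat (tau v R (l - 1)) + 1)"

definition block_set :: "(nat \<Rightarrow> 'a::real_normed_vector) \<Rightarrow> 'a set \<Rightarrow> nat \<Rightarrow> 'a set" where
  "block_set v R l = (\<lambda>j. (1 / norm (v j)) *\<^sub>R v j) ` {block_start v R l .. the_enat (tau v R l)}"

text \<open>Column sets of the matrices in F_l: maximal linearly independent subsets.\<close>
definition max_indep_subsets :: "'a::real_vector set \<Rightarrow> 'a set set" where
  "max_indep_subsets S = {B. B \<subseteq> S \<and> independent B \<and>
      (\<forall>T. B \<subseteq> T \<and> T \<subseteq> S \<and> independent T \<longrightarrow> T = B)}"

text \<open>det(F' F) for a matrix F whose set of columns is B: the Leibniz expansion of the
  determinant of the Gram matrix (entries c_i \<bullet> c_j), rows/columns indexed by B.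
  (This is independent of the order of the columns.)\<close>
definition gram_det :: "'a::real_inner set \<Rightarrow> real" where
  "gram_det B = (\<Sum>p\<in>{p. p permutes B}. of_int (sign p) * (\<Prod>c\<in>B. c \<bullet> p c))"

definition gamma :: "(nat \<Rightarrow> 'a::real_inner) \<Rightarrow> 'a set \<Rightarrow> nat \<Rightarrow> real" where
  "gamma v R l = 1 - Min (gram_det ` max_indep_subsets (block_set v R l))"

definition Lk :: "(nat \<Rightarrow> 'a::real_vector) \<Rightarrow> 'a set \<Rightarrow> nat \<Rightarrow> nat" where
  "Lk v R k = (if \<exists>l. tau v R l + 1 \<le> enat k then GREATEST l. tau v R l + 1 \<le> enat k else 0)"

end

theory Submission
  imports Defs
begin


definition Dg :: "('a::real_inner \<Rightarrow> 'a) \<Rightarrow> ('a \<Rightarrow> 'a) \<Rightarrow> 'a set \<Rightarrow> real" where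
  "Dg x y B = (\<Sum>p\<in>{p. p permutes B}. of_int (sign p) * (\<Prod>c\<in>B. x c \<bullet> y (p c)))"

lemma gram_det_Dg: "gram_det B = Dg id id B"
  by (simp add: gram_det_def Dg_def)

lemma gram_det_empty: "gram_det {} = 1"
  by (simp add: gram_det_def permutes_empty sign_id)

lemma Dg_sym:
  assumes fin: "finite B"
  shows "Dg x y B = Dg y x B"
proof -
  have "of_int (sign (inv p)) * (\<Prod>c\<in>B. x c \<bullet> y (inv p c))
      = of_int (sign p) * (\<Prod>c\<in>B. y c \<bullet> x (p c))" if p: "p permutes B" for p
  proof -
    have perm: "permutation p" using p fin permutation_permutes by blast
    have "(\<Prod>c\<in>B. x c \<bullet> y (inv p c)) = (\<Prod>c\<in>B. x (p c) \<bullet> y (inv p (p c)))"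
      using prod.reindex_bij_betw[OF permutes_imp_bij[OF p], of "\<lambda>c. x c \<bullet> y (inv p c)"] by simp
    also have "\<dots> = (\<Prod>c\<in>B. y c \<bullet> x (p c))"
      by (simp add: permutes_inverses(2)[OF p] inner_commute)
    finally show ?thesis using sign_inverse[OF perm] by simp
  qed
  then show ?thesis unfolding Dg_def
    by (subst sum_permutations_inverse) (auto intro: sum.cong)
qed

lemma Dg_alt:
  assumes fin: "finite B" and c: "c1 \<in> B" "c2 \<in> B" "c1 \<noteq> c2" and eq: "x c1 = x c2"
  shows "Dg x y B = 0"
proof -
  define t where "t = Transposition.transpose c1 c2"
  define f where "f = (\<lambda>p. of_int (sign p) * (\<Prod>c\<in>B. x c \<bullet> y (p c)))"
  have tperm: "t permutes B" unfolding t_def using c(1,2) by (rule permutes_swap_id)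
  have tt: "\<And>c. t (t c) = c" unfolding t_def by (rule transpose_involutory)
  have xt: "\<And>c. x (t c) = x c" unfolding t_def using eq
    by (auto simp: Transposition.transpose_def)
  have key: "f (p \<circ> t) = - f p" if p: "p permutes B" for p
  proof -
    have "sign (p \<circ> t) = sign p * sign t"
      by (rule sign_compose) (use fin p tperm permutation_permutes in blast)+
    also have "sign t = -1" unfolding t_def using c by (simp add: sign_swap_id)
    finally have s: "sign (p \<circ> t) = - sign p" by (simp add: comp_def)
    have "(\<Prod>c\<in>B. x c \<bullet> y ((p \<circ> t) c)) = (\<Prod>c\<in>B. x (t c) \<bullet> y ((p \<circ> t) (t c)))"
      by (rule prod.reindex_bij_betw[OF permutes_imp_bij[OF tperm], symmetric])
    also have "\<dots> = (\<Prod>c\<in>B. x c \<bullet> y (p c))"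
      by (simp only: xt tt o_apply)
    finally show ?thesis using s unfolding f_def by simp
  qed
  have "(\<Sum>p\<in>{p. p permutes B}. f p) = (\<Sum>p\<in>{p. p permutes B}. f (p \<circ> t))"
  proof -
    have ptt: "\<And>p. p \<circ> t \<circ> t = p" using tt by (simp add: fun_eq_iff)
    have pc: "\<And>p. p permutes B \<Longrightarrow> p \<circ> t permutes B" by (rule permutes_compose[OF tperm])
    show ?thesis
      by (rule sum.reindex_bij_witness[where i="\<lambda>p. p \<circ> t" and j="\<lambda>p. p \<circ> t"])
         (simp_all only: ptt pc mem_Collect_eq)
  qed
  also have "\<dots> = - (\<Sum>p\<in>{p. p permutes B}. f p)"
    by (simp add: key sum_negf)
  finally have "(\<Sum>p\<in>{p. p permutes B}. f p) = 0" by simp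
  then show ?thesis unfolding Dg_def f_def .
qed


lemma Dg_upd_lin:
  assumes fin: "finite B" and u: "u \<in> B"
  shows "Dg (x(u := v)) y B = v \<bullet> (\<Sum>p\<in>{p. p permutes B}.
            (of_int (sign p) * (\<Prod>c\<in>B-{u}. x c \<bullet> y (p c))) *\<^sub>R y (p u))"
proof -
  have "(\<Prod>c\<in>B. (x(u := v)) c \<bullet> y (p c)) = (v \<bullet> y (p u)) * (\<Prod>c\<in>B-{u}. x c \<bullet> y (p c))" for p
  proof -
    have "(\<Prod>c\<in>B. (x(u := v)) c \<bullet> y (p c)) = ((x(u := v)) u \<bullet> y (p u)) * (\<Prod>c\<in>B-{u}. (x(u := v)) c \<bullet> y (p c))"
      by (rule prod.remove[OF fin u])
    also have "(\<Prod>c\<in>B-{u}. (x(u := v)) c \<bullet> y (p c)) = (\<Prod>c\<in>B-{u}. x c \<bullet> y (p c))"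
      by (rule prod.cong) auto
    finally show ?thesis by simp
  qed
  then have "Dg (x(u := v)) y B = (\<Sum>p\<in>{p. p permutes B}. of_int (sign p) * ((v \<bullet> y (p u)) * (\<Prod>c\<in>B-{u}. x c \<bullet> y (p c))))"
    unfolding Dg_def by (simp only:)
  also have "\<dots> = (\<Sum>p\<in>{p. p permutes B}. v \<bullet> ((of_int (sign p) * (\<Prod>c\<in>B-{u}. x c \<bullet> y (p c))) *\<^sub>R y (p u)))"
    by (rule sum.cong) (simp_all only: inner_scaleR_right mult_ac)
  also have "\<dots> = v \<bullet> (\<Sum>p\<in>{p. p permutes B}. (of_int (sign p) * (\<Prod>c\<in>B-{u}. x c \<bullet> y (p c))) *\<^sub>R y (p u))"
    by (rule inner_sum_right[symmetric])
  finally show ?thesis .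
qed

lemma Dg_rowop:
  assumes fin: "finite B" and u: "u \<notin> B" and q: "q \<in> span B"
  shows "Dg (id(u := u - q)) y (insert u B) = Dg id y (insert u B)"
proof -
  let ?B = "insert u B"
  define W where "W = (\<Sum>p\<in>{p. p permutes ?B}.
            (of_int (sign p) * (\<Prod>c\<in>?B-{u}. id c \<bullet> y (p c))) *\<^sub>R y (p u))"
  have lin: "Dg (id(u := v)) y ?B = v \<bullet> W" for v
    unfolding W_def by (rule Dg_upd_lin) (use fin in auto)
  have "c \<bullet> W = 0" if c: "c \<in> B" for c
  proof -
    have "Dg (id(u := c)) y ?B = 0"
      by (rule Dg_alt[of _ u c]) (use fin c u in auto)
    then show ?thesis using lin by simp
  qed
  then have "orthogonal W q"
    using orthogonal_to_span[OF q, of W] by (simp add: orthogonal_def inner_commute)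
  then have "q \<bullet> W = 0" by (simp add: orthogonal_def inner_commute)
  then have "Dg (id(u := u - q)) y ?B = u \<bullet> W" using lin by (simp add: inner_diff_left)
  moreover have "Dg id y ?B = u \<bullet> W"
  proof -
    have e: "id(u := u) = id" by (simp add: fun_eq_iff)
    show ?thesis using lin[of u] unfolding e .
  qed
  ultimately show ?thesis by simp
qed

lemma gram_insert:
  assumes fin: "finite B" and u: "u \<notin> B" and q: "q \<in> span B"
    and r: "\<And>c. c \<in> B \<Longrightarrow> (u - q) \<bullet> c = 0"
  shows "gram_det (insert u B) = ((u - q) \<bullet> (u - q)) * gram_det B"
proof -
  let ?B = "insert u B"
  define f where "f = id(u := u - q)"
  have fin': "finite ?B" using fin by simp
  have "gram_det ?B = Dg f f ?B"
  proof -
    have "Dg f f ?B = Dg id f ?B" unfolding f_def by (rule Dg_rowop[OF fin u q])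
    also have "\<dots> = Dg f id ?B" by (rule Dg_sym[OF fin'])
    also have "\<dots> = Dg id id ?B" unfolding f_def by (rule Dg_rowop[OF fin u q])
    finally show ?thesis by (simp add: gram_det_Dg)
  qed
  also have "Dg f f ?B = (\<Sum>p\<in>{p. p permutes B}. of_int (sign p) * (\<Prod>c\<in>?B. f c \<bullet> f (p c)))"
    unfolding Dg_def
  proof (rule sum.mono_neutral_right)
    show "finite {p. p permutes ?B}" using fin' finite_permutations by blast
    show "{p. p permutes B} \<subseteq> {p. p permutes ?B}" by (auto intro: permutes_subset)
    show "\<forall>p\<in>{p. p permutes ?B} - {p. p permutes B}. of_int (sign p) * (\<Prod>c\<in>?B. f c \<bullet> f (p c)) = 0"
    proof
      fix p assume p: "p \<in> {p. p permutes ?B} - {p. p permutes B}"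
      then have pB: "p permutes ?B" by simp
      have "p u \<noteq> u"
      proof
        assume pu: "p u = u"
        have "p permutes B" unfolding permutes_def
        proof
          show "\<forall>x. x \<notin> B \<longrightarrow> p x = x" using pB pu unfolding permutes_def by auto
          show "\<forall>y. \<exists>!x. p x = y" using pB unfolding permutes_def by auto
        qed
        then show False using p by simp
      qed
      moreover have "p u \<in> ?B" using permutes_in_image[OF pB] by simp
      ultimately have "p u \<in> B" by simp
      then have "f u \<bullet> f (p u) = 0" unfolding f_def using r u by (auto simp: inner_commute)
      then have "(\<Prod>c\<in>?B. f c \<bullet> f (p c)) = 0"
        by (intro prod_zero[OF fin']) auto
      then show "of_int (sign p) * (\<Prod>c\<in>?B. f c \<bullet> f (p c)) = 0" by simp
    qed
  qed
  also have "\<dots> = (\<Sum>p\<in>{p. p permutes B}. ((u - q) \<bullet> (u - q)) * (of_int (sign p) * (\<Prod>c\<in>B. c \<bullet> p c)))"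
  proof (rule sum.cong, simp)
    fix p assume "p \<in> {p. p permutes B}"
    then have pB: "p permutes B" by simp
    have pu: "p u = u" using permutes_not_in[OF pB u] .
    have "(\<Prod>c\<in>?B. f c \<bullet> f (p c)) = f u \<bullet> f (p u) * (\<Prod>c\<in>B. f c \<bullet> f (p c))"
      using prod.insert[OF fin u] by simp
    also have "(\<Prod>c\<in>B. f c \<bullet> f (p c)) = (\<Prod>c\<in>B. c \<bullet> p c)"
    proof (rule prod.cong, simp)
      fix c assume c: "c \<in> B"
      then have "p c \<in> B" using permutes_in_image[OF pB] by simp
      then show "f c \<bullet> f (p c) = c \<bullet> p c" using c u unfolding f_def by auto
    qed
    finally show "of_int (sign p) * (\<Prod>c\<in>?B. f c \<bullet> f (p c)) = ((u - q) \<bullet> (u - q)) * (of_int (sign p) * (\<Prod>c\<in>B. c \<bullet> p c))"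
      using pu unfolding f_def by simp
  qed
  also have "\<dots> = ((u - q) \<bullet> (u - q)) * gram_det B"
    by (simp add: gram_det_def sum_distrib_left)
  finally show ?thesis .
qed

lemma orth_decomp:
  fixes u :: "'a::euclidean_space"
  obtains q where "q \<in> span B" "\<And>w. w \<in> span B \<Longrightarrow> (u - q) \<bullet> w = 0"
proof -
  obtain y z where "y \<in> span B" "\<And>w. w \<in> span B \<Longrightarrow> orthogonal z w" "u = y + z"
    using orthogonal_subspace_decomp_exists by blast
  then show ?thesis using that[of y] by (auto simp: orthogonal_def)
qed

lemma gram_indep_bounds:
  fixes B :: "'a::euclidean_space set"
  assumes "finite B" "independent B" "\<And>b. b \<in> B \<Longrightarrow> norm b = 1"
  shows "0 < gram_det B \<and> gram_det B \<le> 1"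
  using assms
proof (induction B rule: finite_induct)
  case empty then show ?case by (simp add: gram_det_empty)
next
  case (insert u F)
  have indF: "independent F" and us: "u \<notin> span F"
    using insert.prems(1) insert.hyps(2) by (auto simp: independent_insert)
  have IH: "0 < gram_det F \<and> gram_det F \<le> 1" using insert indF by auto
  obtain q where q: "q \<in> span F" and orth: "\<And>w. w \<in> span F \<Longrightarrow> (u - q) \<bullet> w = 0"
    using orth_decomp by blast
  have g: "gram_det (insert u F) = ((u - q) \<bullet> (u - q)) * gram_det F"
    by (rule gram_insert[OF insert.hyps(1,2) q]) (use orth span_base in blast)
  have "u - q \<noteq> 0" using q us by auto
  then have pos: "0 < (u - q) \<bullet> (u - q)" by simp
  have "(norm u)\<^sup>2 = (norm q)\<^sup>2 + (norm (u - q))\<^sup>2"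
    using norm_add_Pythagorean[of q "u - q"] orth[OF q] by (simp add: orthogonal_def inner_commute)
  then have "q \<bullet> q + (u - q) \<bullet> (u - q) = 1" using insert.prems(2)[of u]
    by (simp add: power2_norm_eq_inner)
  then have "(u - q) \<bullet> (u - q) \<le> 1" using inner_ge_zero[of q] by linarith
  then have "(u - q) \<bullet> (u - q) * gram_det F \<le> 1"
    using IH pos by (intro mult_le_one) auto
  moreover have "0 < (u - q) \<bullet> (u - q) * gram_det F"
    using IH pos by (intro mult_pos_pos) auto
  ultimately show ?case unfolding g by blast
qed



lemma key_ineq:
  fixes p x c s a b d :: real
  assumes c0: "0 \<le> c" and s0: "0 \<le> s" and cs: "c\<^sup>2 + s\<^sup>2 = 1" and xp: "\<bar>x\<bar> \<le> c * p"
    and p0: "0 \<le> p" and pa: "p\<^sup>2 \<le> (1 - d) * a\<^sup>2" and a0: "0 \<le> a" and d0: "0 \<le> d" and d1: "d \<le> 1"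
  shows "p\<^sup>2 + b\<^sup>2 - (x + s * b)\<^sup>2 \<le> (1 - d * s\<^sup>2) * (a\<^sup>2 + b\<^sup>2)"
proof (cases "s * \<bar>b\<bar> \<le> c * p")
  case True
  have "(1 - d) * a\<^sup>2 \<le> a\<^sup>2" using d0 by (simp add: algebra_simps)
  then have "p\<^sup>2 \<le> a\<^sup>2" using pa by linarith
  then have pa': "p \<le> a" using a0 by (rule power2_le_imp_le)
  have "(s * \<bar>b\<bar>)\<^sup>2 \<le> (c * p)\<^sup>2" using True s0 by (intro power_mono) auto
  also have "\<dots> \<le> (c * a)\<^sup>2" using pa' c0 p0 by (intro power_mono mult_left_mono) auto
  finally have sb: "s\<^sup>2 * b\<^sup>2 \<le> c\<^sup>2 * a\<^sup>2" by (simp add: power_mult_distrib)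
  have "p\<^sup>2 + b\<^sup>2 - (x + s * b)\<^sup>2 \<le> (1 - d) * a\<^sup>2 + b\<^sup>2" using pa zero_le_power2[of "x + s * b"] by linarith
  also have "\<dots> = (1 - d * s\<^sup>2) * (a\<^sup>2 + b\<^sup>2) - d * (c\<^sup>2 * a\<^sup>2 - s\<^sup>2 * b\<^sup>2)"
    using cs by algebra
  also have "\<dots> \<le> (1 - d * s\<^sup>2) * (a\<^sup>2 + b\<^sup>2)" using sb d0 by simp
  finally show ?thesis .
next
  case False
  define bb where "bb = \<bar>b\<bar>"
  have bb0: "0 \<le> bb" unfolding bb_def by simp
  have bb2: "bb\<^sup>2 = b\<^sup>2" unfolding bb_def by simp
  have le: "s * bb - c * p \<le> \<bar>x + s * b\<bar>" using xp s0 unfolding bb_def by (cases "b \<ge> 0") auto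
  have ge: "0 \<le> s * bb - c * p" using False unfolding bb_def by simp
  have "(s * bb - c * p)\<^sup>2 \<le> \<bar>x + s * b\<bar>\<^sup>2" by (rule power_mono[OF le ge])
  then have "(s * bb - c * p)\<^sup>2 \<le> (x + s * b)\<^sup>2" by simp
  then have "p\<^sup>2 + b\<^sup>2 - (x + s * b)\<^sup>2 \<le> p\<^sup>2 + bb\<^sup>2 - (s * bb - c * p)\<^sup>2" using bb2 by linarith
  also have "\<dots> = (s * p + c * bb)\<^sup>2" using cs by algebra
  also have "\<dots> \<le> (1 - d * s\<^sup>2) * (a\<^sup>2 + bb\<^sup>2)"
  proof -
    define k where "k = sqrt (1 - d)"
    have k0: "0 \<le> k" and kk: "k\<^sup>2 = 1 - d" using d1 unfolding k_def by auto
    have ka: "(k * a)\<^sup>2 = (1 - d) * a\<^sup>2" by (simp only: power_mult_distrib kk)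
    have "p\<^sup>2 \<le> (k * a)\<^sup>2" unfolding ka by (rule pa)
    then have pk: "p \<le> k * a" by (rule power2_le_imp_le) (use k0 a0 in simp)
    have "s * p + c * bb \<le> s * (k * a) + c * bb" using pk s0 by (simp add: mult_left_mono)
    moreover have "0 \<le> s * p + c * bb" using s0 p0 c0 bb0 by simp
    ultimately have "(s * p + c * bb)\<^sup>2 \<le> (s * (k * a) + c * bb)\<^sup>2" by (intro power_mono) auto
    also have "\<dots> \<le> (s\<^sup>2 * k\<^sup>2 + c\<^sup>2) * (a\<^sup>2 + bb\<^sup>2)"
    proof -
      have "(s\<^sup>2 * k\<^sup>2 + c\<^sup>2) * (a\<^sup>2 + bb\<^sup>2) - (s * (k * a) + c * bb)\<^sup>2 = (s * k * bb - c * a)\<^sup>2"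
        by algebra
      then show ?thesis by (smt (verit) zero_le_power2)
    qed
    also have "\<dots> = (1 - d * s\<^sup>2) * (a\<^sup>2 + bb\<^sup>2)" using kk cs by algebra
    finally show ?thesis .
  qed
  also have "\<dots> = (1 - d * s\<^sup>2) * (a\<^sup>2 + b\<^sup>2)" using bb2 by simp
  finally show ?thesis .
qed


definition stp :: "'a::real_inner \<Rightarrow> 'a \<Rightarrow> 'a" where
  "stp v z = z - ((v \<bullet> z) / (norm v)\<^sup>2) *\<^sub>R v"

fun itr :: "(nat \<Rightarrow> 'a::real_inner) \<Rightarrow> nat \<Rightarrow> nat \<Rightarrow> 'a \<Rightarrow> 'a" where
  "itr v s 0 z = z"
| "itr v s (Suc n) z = stp (v (s + n)) (itr v s n z)"

lemma stp_norm2: "(norm (stp v z))\<^sup>2 = (norm z)\<^sup>2 - (v \<bullet> z)\<^sup>2 / (norm v)\<^sup>2"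
proof (cases "v = 0")
  case True then show ?thesis by (simp add: stp_def)
next
  case False
  define t where "t = (v \<bullet> z) / (v \<bullet> v)"
  have nv: "v \<bullet> v \<noteq> 0" using False by simp
  have st: "stp v z = z - t *\<^sub>R v" unfolding stp_def t_def by (simp add: power2_norm_eq_inner)
  have "(norm (stp v z))\<^sup>2 = z \<bullet> z - 2 * t * (v \<bullet> z) + t * t * (v \<bullet> v)"
    unfolding st power2_norm_eq_inner by (simp add: inner_diff_left inner_diff_right inner_commute algebra_simps)
  also have "\<dots> = z \<bullet> z - (v \<bullet> z)\<^sup>2 / (v \<bullet> v)"
    unfolding t_def using nv by (simp add: field_simps power2_eq_square)
  finally show ?thesis by (simp add: power2_norm_eq_inner)
qed

lemma stp_norm_le: "norm (stp v z) \<le> norm z"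
proof -
  have "0 \<le> (v \<bullet> z)\<^sup>2 / (norm v)\<^sup>2" by simp
  then have "(norm (stp v z))\<^sup>2 \<le> (norm z)\<^sup>2" unfolding stp_norm2 by linarith
  then show ?thesis by (rule power2_le_imp_le) simp
qed

lemma stp_add: "stp v (a + b) = stp v a + stp v b"
  by (simp add: stp_def inner_add_right add_divide_distrib scaleR_add_left algebra_simps)

lemma stp_fix: "v \<bullet> r = 0 \<Longrightarrow> stp v r = r"
  by (simp add: stp_def)

lemma stp_in: "subspace S \<Longrightarrow> v \<in> S \<Longrightarrow> z \<in> S \<Longrightarrow> stp v z \<in> S"
  by (simp add: stp_def subspace_diff subspace_scale)

lemma itr_add: "itr v s n (a + b) = itr v s n a + itr v s n b"
  by (induction n) (simp_all add: stp_add)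

lemma itr_fix: "(\<And>j. s \<le> j \<Longrightarrow> j < s + n \<Longrightarrow> v j \<bullet> r = 0) \<Longrightarrow> itr v s n r = r"
  by (induction n) (simp_all add: stp_fix)

lemma itr_in: "subspace S \<Longrightarrow> (\<And>j. s \<le> j \<Longrightarrow> j < s + n \<Longrightarrow> v j \<in> S) \<Longrightarrow> z \<in> S \<Longrightarrow> itr v s n z \<in> S"
  by (induction n) (simp_all add: stp_in)

lemma itr_norm_le: "norm (itr v s n z) \<le> norm z"
  by (induction n) (auto intro: order_trans[OF stp_norm_le])



lemma core:
  fixes v :: "nat \<Rightarrow> 'a::euclidean_space"
  assumes nz: "\<And>j. v j \<noteq> 0"
  shows "\<exists>B. B \<subseteq> (\<lambda>j. (1 / norm (v j)) *\<^sub>R v j) ` {s..<s+n} \<and> independent B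
    \<and> span B = span (v ` {s..<s+n}) \<and> 0 < gram_det B \<and> gram_det B \<le> 1
    \<and> (\<forall>z \<in> span (v ` {s..<s+n}). (norm (itr v s n z))\<^sup>2 \<le> (1 - gram_det B) * (norm z)\<^sup>2)"
proof (induction n)
  case 0
  show ?case
    by (rule exI[of _ "{}"]) (simp add: gram_det_empty independent_empty)
next
  case (Suc n)
  let ?U = "(\<lambda>j. (1 / norm (v j)) *\<^sub>R v j)"
  let ?V = "v ` {s..<s+n}"
  define vn where "vn = v (s + n)"
  define u where "u = (1 / norm vn) *\<^sub>R vn"
  have vn0: "vn \<noteq> 0" unfolding vn_def by (rule nz)
  have nu: "norm u = 1" unfolding u_def using vn0 by simp
  have vnu: "vn = norm vn *\<^sub>R u" unfolding u_def using vn0 by simp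
  have seteq: "{s..<s + Suc n} = insert (s + n) {s..<s+n}" by auto
  have Veq: "v ` {s..<s + Suc n} = insert vn ?V" unfolding seteq vn_def by simp
  have Ueq: "?U ` {s..<s + Suc n} = insert u (?U ` {s..<s+n})" unfolding seteq u_def vn_def by simp
  obtain B where B: "B \<subseteq> ?U ` {s..<s+n}" "independent B" "span B = span ?V"
      "0 < gram_det B" "gram_det B \<le> 1"
      "\<And>z. z \<in> span ?V \<Longrightarrow> (norm (itr v s n z))\<^sup>2 \<le> (1 - gram_det B) * (norm z)\<^sup>2"
    using Suc.IH by blast
  have finB: "finite B" using B(1) finite_subset by blast
  have vin: "v j \<in> span ?V" if "s \<le> j" "j < s + n" for j
    using that by (intro span_base) auto
  have Tin: "itr v s n z \<in> span ?V" if "z \<in> span ?V" for z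
    by (rule itr_in[OF subspace_span vin that]) auto
  show ?case
  proof (cases "vn \<in> span ?V")
    case True
    have sp: "span (v ` {s..<s + Suc n}) = span ?V" unfolding Veq using True by (rule span_redundant)
    show ?thesis
    proof (intro exI[of _ B] conjI ballI)
      show "B \<subseteq> ?U ` {s..<s + Suc n}" using B(1) Ueq by auto
      show "independent B" "0 < gram_det B" "gram_det B \<le> 1" using B by auto
      show "span B = span (v ` {s..<s + Suc n})" using sp B(3) by simp
      fix z assume "z \<in> span (v ` {s..<s + Suc n})"
      then have z: "z \<in> span ?V" using sp by simp
      have "norm (itr v s (Suc n) z) \<le> norm (itr v s n z)" by (simp add: stp_norm_le)
      then have "(norm (itr v s (Suc n) z))\<^sup>2 \<le> (norm (itr v s n z))\<^sup>2" by (simp add: power_mono)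
      also have "\<dots> \<le> (1 - gram_det B) * (norm z)\<^sup>2" using B(6)[OF z] .
      finally show "(norm (itr v s (Suc n) z))\<^sup>2 \<le> (1 - gram_det B) * (norm z)\<^sup>2" .
    qed
  next
    case False
    have uB: "u \<notin> span B"
    proof
      assume "u \<in> span B"
      then have "norm vn *\<^sub>R u \<in> span ?V" using B(3) span_mul by blast
      then show False using False vnu by simp
    qed
    then have uB': "u \<notin> B" using span_base by blast
    obtain q where q: "q \<in> span B" and orth: "\<And>w. w \<in> span B \<Longrightarrow> (u - q) \<bullet> w = 0"
      using orth_decomp by blast
    define r where "r = u - q"
    have ur: "u = q + r" unfolding r_def by simp
    have G': "gram_det (insert u B) = (r \<bullet> r) * gram_det B"
      unfolding r_def by (rule gram_insert[OF finB uB' q]) (use orth span_base in blast)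
    have ind': "independent (insert u B)" using uB B(2) by (rule independent_insertI)
    have units: "\<And>b. b \<in> insert u B \<Longrightarrow> norm b = 1"
      using nu B(1) nz by auto
    have bnd: "0 < gram_det (insert u B) \<and> gram_det (insert u B) \<le> 1"
      using gram_indep_bounds[OF _ ind' units] finB by simp
    have spB': "span (insert u B) = span (v ` {s..<s + Suc n})"
    proof
      have "insert u B \<subseteq> span (insert vn ?V)"
      proof -
        have "u \<in> span (insert vn ?V)" unfolding u_def by (intro span_mul span_base) simp
        moreover have "B \<subseteq> span (insert vn ?V)"
          using B(3) span_mono[of ?V "insert vn ?V"] span_superset[of B] by auto
        ultimately show ?thesis by simp
      qed
      then show "span (insert u B) \<subseteq> span (v ` {s..<s + Suc n})"
        unfolding Veq by (rule span_minimal[OF _ subspace_span])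
      have "insert vn ?V \<subseteq> span (insert u B)"
      proof -
        have "vn \<in> span (insert u B)" by (subst vnu) (intro span_mul span_base, simp)
        moreover have "?V \<subseteq> span (insert u B)"
          using B(3) span_mono[of B "insert u B"] span_superset[of ?V] by auto
        ultimately show ?thesis by simp
      qed
      then show "span (v ` {s..<s + Suc n}) \<subseteq> span (insert u B)"
        unfolding Veq by (rule span_minimal[OF _ subspace_span])
    qed
    show ?thesis
    proof (intro exI[of _ "insert u B"] conjI ballI)
      show "insert u B \<subseteq> ?U ` {s..<s + Suc n}" using B(1) Ueq by auto
      show "independent (insert u B)" by (rule ind')
      show "0 < gram_det (insert u B)" "gram_det (insert u B) \<le> 1" using bnd by auto
      show "span (insert u B) = span (v ` {s..<s + Suc n})" by (rule spB')
      fix z assume "z \<in> span (v ` {s..<s + Suc n})"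
      then have "z \<in> span (insert u B)" using spB' by simp
      then obtain mu where a': "z - mu *\<^sub>R u \<in> span B" using span_breakdown_eq by blast
      define a where "a = z - mu *\<^sub>R u + mu *\<^sub>R q"
      have aB: "a \<in> span B" unfolding a_def using a' q by (intro span_add span_mul)
      then have aV: "a \<in> span ?V" using B(3) by simp
      have za: "z = a + mu *\<^sub>R r" unfolding a_def r_def by (simp add: algebra_simps)
      have rv: "v j \<bullet> (mu *\<^sub>R r) = 0" if "s \<le> j" "j < s + n" for j
      proof -
        have "v j \<in> span B" using vin[OF that] B(3) by simp
        then have "r \<bullet> v j = 0" using orth unfolding r_def by blast
        then show ?thesis by (simp add: inner_commute)
      qed
      define Ta where "Ta = itr v s n a"
      have TaB: "Ta \<in> span B" unfolding Ta_def using Tin[OF aV] B(3) by simp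
      have Tz: "itr v s n z = Ta + mu *\<^sub>R r"
        unfolding za itr_add Ta_def using itr_fix[of s n v "mu *\<^sub>R r"] rv by simp
      define y where "y = Ta + mu *\<^sub>R r"
      have rTa: "r \<bullet> Ta = 0" using orth TaB unfolding r_def by blast
      have rq: "r \<bullet> q = 0" using orth q unfolding r_def by blast
      have ra: "r \<bullet> a = 0" using orth aB unfolding r_def by blast
      define sN where "sN = norm r"
      define cN where "cN = norm q"
      define p where "p = norm Ta"
      define al where "al = norm a"
      define be where "be = mu * sN"
      define x where "x = q \<bullet> Ta"
      define d where "d = gram_det B"
      have rr: "r \<bullet> r = sN\<^sup>2" unfolding sN_def by (simp add: power2_norm_eq_inner)
      have step: "itr v s (Suc n) z = stp vn y" unfolding y_def vn_def using Tz by simp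
      have n1: "(norm (stp vn y))\<^sup>2 = (norm y)\<^sup>2 - (u \<bullet> y)\<^sup>2"
      proof -
        have "u \<bullet> y = (vn \<bullet> y) / norm vn" unfolding u_def by simp
        then have "(u \<bullet> y)\<^sup>2 = (vn \<bullet> y)\<^sup>2 / (norm vn)\<^sup>2" by (simp add: power_divide)
        then show ?thesis using stp_norm2 by simp
      qed
      have n2: "(norm y)\<^sup>2 = p\<^sup>2 + be\<^sup>2"
      proof -
        have "(norm y)\<^sup>2 = (norm Ta)\<^sup>2 + (norm (mu *\<^sub>R r))\<^sup>2"
          unfolding y_def by (rule norm_add_Pythagorean) (use rTa in \<open>simp add: orthogonal_def inner_commute[of Ta r]\<close>)
        then show ?thesis unfolding p_def be_def sN_def by (simp add: power_mult_distrib)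
      qed
      have n3: "u \<bullet> y = x + sN * be"
      proof -
        have "u \<bullet> y = q \<bullet> Ta + mu * (q \<bullet> r) + r \<bullet> Ta + mu * (r \<bullet> r)"
          unfolding ur y_def by (simp add: inner_add_left inner_add_right algebra_simps)
        also have "\<dots> = x + sN * be" unfolding x_def be_def using rTa rq rr
          by (simp add: inner_commute power2_eq_square)
        finally show ?thesis .
      qed
      have n4: "(norm z)\<^sup>2 = al\<^sup>2 + be\<^sup>2"
      proof -
        have "(norm z)\<^sup>2 = (norm a)\<^sup>2 + (norm (mu *\<^sub>R r))\<^sup>2"
          unfolding za by (rule norm_add_Pythagorean) (use ra in \<open>simp add: orthogonal_def inner_commute[of a r]\<close>)
        then show ?thesis unfolding al_def be_def sN_def by (simp add: power_mult_distrib)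
      qed
      have cs: "cN\<^sup>2 + sN\<^sup>2 = 1"
      proof -
        have "(norm u)\<^sup>2 = (norm q)\<^sup>2 + (norm r)\<^sup>2"
          unfolding ur by (rule norm_add_Pythagorean) (use rq in \<open>simp add: orthogonal_def inner_commute[of q r]\<close>)
        then show ?thesis using nu unfolding cN_def sN_def by simp
      qed
      have xp: "\<bar>x\<bar> \<le> cN * p" unfolding x_def cN_def p_def by (rule Cauchy_Schwarz_ineq2)
      have pa: "p\<^sup>2 \<le> (1 - d) * al\<^sup>2" unfolding p_def al_def d_def Ta_def by (rule B(6)[OF aV])
      have ki: "p\<^sup>2 + be\<^sup>2 - (x + sN * be)\<^sup>2 \<le> (1 - d * sN\<^sup>2) * (al\<^sup>2 + be\<^sup>2)"
        by (rule key_ineq) (use cs xp pa B(4,5) in \<open>auto simp: cN_def sN_def p_def al_def d_def\<close>)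
      have "gram_det (insert u B) = d * sN\<^sup>2" unfolding G' d_def rr by simp
      then show "(norm (itr v s (Suc n) z))\<^sup>2 \<le> (1 - gram_det (insert u B)) * (norm z)\<^sup>2"
        unfolding step n1 n2 n3 n4 using ki by simp
    qed
  qed
qed



lemma tau_Suc:
  assumes "tau v R (Suc l) = enat t"
  shows "\<exists>t'. tau v R l = enat t' \<and> block_start v R (Suc l) \<le> t
          \<and> span (v ` {block_start v R (Suc l)..t}) = R"
proof (cases "tau v R l")
  case (enat t')
  define s where "s = (if l = 0 then 0 else t' + 1)"
  have bs: "block_start v R (Suc l) = s" unfolding block_start_def s_def using enat by simp
  have ex: "\<exists>k\<ge>s. span (v ` {s..k}) = R"
  proof (rule ccontr)
    assume "\<not> ?thesis"
    then have "tau v R (Suc l) = \<infinity>" using enat by (simp add: s_def Let_def)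
    then show False using assms by simp
  qed
  then have "tau v R (Suc l) = enat (LEAST k. s \<le> k \<and> span (v ` {s..k}) = R)"
    using enat by (simp add: s_def Let_def)
  then have t: "t = (LEAST k. s \<le> k \<and> span (v ` {s..k}) = R)" using assms by simp
  have "s \<le> t \<and> span (v ` {s..t}) = R"
    unfolding t by (rule LeastI_ex) (use ex in blast)
  then show ?thesis using enat bs by auto
next
  case infinity
  then show ?thesis using assms by simp
qed

lemma tau_bound: "tau v R l = enat t \<Longrightarrow> l \<le> t + 1"
proof (induction l arbitrary: t)
  case 0 then show ?case by simp
next
  case (Suc l)
  obtain t' where t': "tau v R l = enat t'" "block_start v R (Suc l) \<le> t"
    using tau_Suc[OF Suc.prems] by blast
  show ?case
  proof (cases "l = 0")
    case True then show ?thesis by simp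
  next
    case False
    then have "block_start v R (Suc l) = t' + 1" unfolding block_start_def using t' by simp
    then show ?thesis using Suc.IH[OF t'(1)] t'(2) by simp
  qed
qed

locale detsetting =
  fixes v :: "nat \<Rightarrow> 'a::euclidean_space" and R :: "'a set" and d :: "nat \<Rightarrow> 'a"
  assumes nz: "\<And>k. v k \<noteq> 0" and vR: "\<And>k. v k \<in> R" and subR: "subspace R"
    and d0: "d 0 \<in> R" and dS: "\<And>k. d (Suc k) = stp (v k) (d k)"
begin

lemma d_itr: "d (s + n) = itr v s n (d s)"
  by (induction n) (simp_all add: dS)

lemma d_in: "d k \<in> R"
  by (induction k) (simp_all add: dS d0 stp_in subR vR)

lemma d_mono: "k \<le> k' \<Longrightarrow> norm (d k') \<le> norm (d k)"
proof (induction k' rule: dec_induct)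
  case base then show ?case by simp
next
  case (step n) then show ?case using stp_norm_le[of "v n" "d n"] by (simp add: dS)
qed

lemma block:
  assumes l: "1 \<le> l" and t: "tau v R l = enat t"
    and st: "block_start v R l \<le> t" and sp: "span (v ` {block_start v R l..t}) = R"
  shows "0 \<le> gamma v R l \<and> gamma v R l < 1"
    and "(norm (d (t + 1)))\<^sup>2 \<le> gamma v R l * (norm (d (block_start v R l)))\<^sup>2"
proof -
  define s where "s = block_start v R l"
  define n where "n = Suc t - s"
  let ?U = "(\<lambda>j. (1 / norm (v j)) *\<^sub>R v j)"
  have iv: "{s..<s+n} = {s..t}" unfolding n_def using st s_def by auto
  have bs: "block_set v R l = ?U ` {s..t}" unfolding block_set_def s_def using t by simp
  obtain B where B: "B \<subseteq> ?U ` {s..t}" "independent B" "span B = span (v ` {s..t})"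
      "0 < gram_det B" "gram_det B \<le> 1"
      "\<And>z. z \<in> span (v ` {s..t}) \<Longrightarrow> (norm (itr v s n z))\<^sup>2 \<le> (1 - gram_det B) * (norm z)\<^sup>2"
    using core[where v=v and s=s and n=n, OF nz] unfolding iv by blast
  have finS: "finite (block_set v R l)" unfolding bs by simp
  have Bmax: "B \<in> max_indep_subsets (block_set v R l)"
    unfolding max_indep_subsets_def
  proof (intro CollectI conjI allI impI)
    show "B \<subseteq> block_set v R l" using B(1) bs by simp
    show "independent B" by (rule B(2))
    fix T assume T: "B \<subseteq> T \<and> T \<subseteq> block_set v R l \<and> independent T"
    have finB: "finite B" using B(1) finite_subset by blast
    have "T \<subseteq> span B"
    proof
      fix x assume "x \<in> T"
      then obtain j where j: "j \<in> {s..t}" "x = ?U j" using T bs by auto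
      have "v j \<in> span B" using B(3) j(1) by (simp add: span_base)
      then show "x \<in> span B" using j(2) by (simp add: span_mul)
    qed
    then have "finite T \<and> card T \<le> card B" using independent_span_bound[OF finB] T by blast
    then show "T = B" using T card_subset_eq by (metis antisym card_mono)
  qed
  let ?G = "gram_det ` max_indep_subsets (block_set v R l)"
  have finG: "finite ?G" unfolding max_indep_subsets_def using finS
    by (intro finite_imageI) (auto intro: finite_subset[of _ "Pow (block_set v R l)"])
  have Gb: "0 < g \<and> g \<le> 1" if gG: "g \<in> ?G" for g
  proof -
    obtain B' where B': "B' \<in> max_indep_subsets (block_set v R l)" "g = gram_det B'" using gG by blast
    then have sub: "B' \<subseteq> ?U ` {s..t}" and ind: "independent B'"
      unfolding max_indep_subsets_def bs by auto
    have "finite B'" using sub finite_subset by blast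
    moreover have "\<And>b. b \<in> B' \<Longrightarrow> norm b = 1" using sub nz by auto
    ultimately show ?thesis using gram_indep_bounds[OF _ ind] B'(2) by blast
  qed
  have minle: "Min ?G \<le> gram_det B" using finG Bmax by simp
  have minin: "Min ?G \<in> ?G" using finG Bmax by (intro Min_in) auto
  have gdef: "gamma v R l = 1 - Min ?G" unfolding gamma_def ..
  show "0 \<le> gamma v R l \<and> gamma v R l < 1" using Gb[OF minin] gdef by simp
  have "d s \<in> span (v ` {s..t})" using d_in sp s_def by simp
  then have "(norm (itr v s n (d s)))\<^sup>2 \<le> (1 - gram_det B) * (norm (d s))\<^sup>2" by (rule B(6))
  also have "\<dots> \<le> gamma v R l * (norm (d s))\<^sup>2" using minle gdef by (simp add: mult_right_mono)
  finally show "(norm (d (t + 1)))\<^sup>2 \<le> gamma v R l * (norm (d (block_start v R l)))\<^sup>2"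
    using d_itr[of s n] iv st unfolding s_def n_def by simp
qed

lemma part1: "\<forall>l\<ge>1. tau v R l \<noteq> \<infinity> \<longrightarrow> 0 \<le> gamma v R l \<and> gamma v R l < 1"
proof (intro allI impI)
  fix l :: nat assume l: "1 \<le> l" and "tau v R l \<noteq> \<infinity>"
  then obtain t where t: "tau v R l = enat t" by auto
  obtain l' where l': "l = Suc l'" using l by (cases l) auto
  obtain t' where "block_start v R l \<le> t" "span (v ` {block_start v R l..t}) = R"
    using tau_Suc[of v R l' t] t l' by blast
  then show "0 \<le> gamma v R l \<and> gamma v R l < 1" using block(1)[OF l t] by blast
qed

lemma part2: "tau v R l = enat t \<Longrightarrow> (norm (d (t + 1)))\<^sup>2 \<le> (\<Prod>j=1..l. gamma v R j) * (norm (d 0))\<^sup>2"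
proof (induction l arbitrary: t)
  case 0
  then have "t = 0" by (simp add: zero_enat_def)
  moreover have "norm (d 1) \<le> norm (d 0)" by (rule d_mono) simp
  ultimately show ?case by (simp add: power_mono)
next
  case (Suc l)
  obtain t' where t': "tau v R l = enat t'" "block_start v R (Suc l) \<le> t"
      "span (v ` {block_start v R (Suc l)..t}) = R"
    using tau_Suc[OF Suc.prems] by blast
  have bl: "(norm (d (t + 1)))\<^sup>2 \<le> gamma v R (Suc l) * (norm (d (block_start v R (Suc l))))\<^sup>2"
    using block(2)[OF _ Suc.prems t'(2,3)] by simp
  have g0: "0 \<le> gamma v R (Suc l)" using block(1)[OF _ Suc.prems t'(2,3)] by simp
  have pr: "(\<Prod>j=1..Suc l. gamma v R j) = gamma v R (Suc l) * (\<Prod>j=1..l. gamma v R j)"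
    by (rule prod.nat_ivl_Suc') simp
  show ?case
  proof (cases "l = 0")
    case True
    then have "block_start v R (Suc l) = 0" unfolding block_start_def by simp
    then show ?thesis using bl True by simp
  next
    case False
    then have "block_start v R (Suc l) = t' + 1" unfolding block_start_def using t' by simp
    then have "(norm (d (t + 1)))\<^sup>2 \<le> gamma v R (Suc l) * (norm (d (t' + 1)))\<^sup>2" using bl by simp
    also have "\<dots> \<le> gamma v R (Suc l) * ((\<Prod>j=1..l. gamma v R j) * (norm (d 0))\<^sup>2)"
      using Suc.IH[OF t'(1)] g0 by (rule mult_left_mono)
    finally show ?thesis unfolding pr by (simp add: mult.assoc)
  qed
qed

lemma part3: "(norm (d k))\<^sup>2 \<le> (\<Prod>j=1..Lk v R k. gamma v R j) * (norm (d 0))\<^sup>2"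
proof (cases "\<exists>l. tau v R l + 1 \<le> enat k")
  case True
  let ?P = "\<lambda>l. tau v R l + 1 \<le> enat k"
  have bnd: "l \<le> k" if "?P l" for l
  proof (cases "tau v R l")
    case (enat t)
    then have "t + 1 \<le> k" using that by (simp add: one_enat_def)
    then show ?thesis using tau_bound[OF enat] by simp
  next
    case infinity then show ?thesis using that by simp
  qed
  obtain l0 where l0: "?P l0" using True by blast
  have "?P (Greatest ?P)" by (rule GreatestI_nat[of ?P l0 k]) (use l0 bnd in auto)
  then have PL: "?P (Lk v R k)" unfolding Lk_def using True by simp
  then obtain t where t: "tau v R (Lk v R k) = enat t" "t + 1 \<le> k"
    by (cases "tau v R (Lk v R k)") (auto simp: one_enat_def)
  have "norm (d k) \<le> norm (d (t + 1))" using t(2) by (rule d_mono)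
  then have "(norm (d k))\<^sup>2 \<le> (norm (d (t + 1)))\<^sup>2" by (simp add: power_mono)
  also have "\<dots> \<le> (\<Prod>j=1..Lk v R k. gamma v R j) * (norm (d 0))\<^sup>2" by (rule part2[OF t(1)])
  finally show ?thesis .
next
  case False
  then have "Lk v R k = 0" unfolding Lk_def by simp
  moreover have "norm (d k) \<le> norm (d 0)" by (rule d_mono) simp
  ultimately show ?thesis by (simp add: power_mono)
qed

end



lemma oproj_eq:
  assumes "subspace W" "u \<in> W" "\<And>z. z \<in> W \<Longrightarrow> (x - u) \<bullet> z = 0"
  shows "oproj W x = u"
  unfolding oproj_def
proof (rule the_equality)
  show "u \<in> W \<and> (\<forall>z\<in>W. (x - u) \<bullet> z = 0)" using assms by auto
  fix u' assume u': "u' \<in> W \<and> (\<forall>z\<in>W. (x - u') \<bullet> z = 0)"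
  have dW: "u' - u \<in> W" using assms(1,2) u' by (simp add: subspace_diff)
  have "(x - u) \<bullet> (u' - u) - (x - u') \<bullet> (u' - u) = 0" using assms(3)[OF dW] u' dW by simp
  then have "(u' - u) \<bullet> (u' - u) = 0" by (simp add: inner_diff_left inner_diff_right algebra_simps)
  then show "u' = u" by simp
qed

lemma subspace_orth_comp: "subspace (orth_comp W)"
  unfolding subspace_def orth_comp_def by (auto simp: inner_add_left)

lemma kacz_step:
  fixes A :: "real^'d^'n"
  shows "kacz A (A *v xs) u x0 (Suc k) - xs - y
    = (kacz A (A *v xs) u x0 k - xs - y)
      - (((transpose A *v u k) \<bullet> (kacz A (A *v xs) u x0 k - xs) / (norm (transpose A *v u k))\<^sup>2)
          *\<^sub>R (transpose A *v u k))"
proof -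
  let ?x = "kacz A (A *v xs) u x0 k"
  have "u k \<bullet> (A *v xs - A *v ?x) = u k \<bullet> (A *v (xs - ?x))"
    by (simp add: matrix_vector_mult_diff_distrib)
  also have "\<dots> = (transpose A *v u k) \<bullet> (xs - ?x)"
    by (simp add: dot_lmul_matrix)
  also have "\<dots> = - ((transpose A *v u k) \<bullet> (?x - xs))"
    by (simp add: inner_diff_right)
  finally have c: "u k \<bullet> (A *v xs - A *v ?x) = - ((transpose A *v u k) \<bullet> (?x - xs))" .
  have k: "kacz A (A *v xs) u x0 (Suc k) = ?x + ((u k \<bullet> (A *v xs - A *v ?x)) / (norm (transpose A *v u k))\<^sup>2) *\<^sub>R (transpose A *v u k)"
    by (simp only: kacz.simps)
  have gen: "\<And>(X::real^'d) a n V. X + (- a / n) *\<^sub>R V - xs - y = X - xs - y - (a / n) *\<^sub>R V"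
    by (simp add: algebra_simps)
  show ?thesis unfolding k c by (rule gen)
qed

theorem mainTheorem10:
  fixes M :: "'o measure"
    and A :: "real^'d^'n" and b :: "real^'n" and xs x0 :: "real^'d"
    and w :: "'o \<Rightarrow> real^'n" and ws :: "nat \<Rightarrow> 'o \<Rightarrow> real^'n"
  assumes "prob_space M"
    and "A *v xs = b"
    and "w \<in> borel_measurable M"
    and "\<And>l. ws l \<in> borel_measurable M"
    and "\<And>l. measure M {\<omega> \<in> space M. transpose A *v ws l \<omega> \<in> Rsp M A w} = 1"
  shows "AE \<omega> in M.
    (\<forall>k. transpose A *v ws k \<omega> \<noteq> 0) \<longrightarrow>
    (let v = (\<lambda>k. transpose A *v ws k \<omega>); R = Rsp M A w; N = Nsp M A w;
         x = kacz A b (\<lambda>k. ws k \<omega>) x0 in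
      (\<forall>l\<ge>1. tau v R l \<noteq> \<infinity> \<longrightarrow> 0 \<le> gamma v R l \<and> gamma v R l < 1)
    \<and> (\<forall>l t. tau v R l = enat t \<longrightarrow>
          (norm (x (t + 1) - xs - oproj N (x0 - xs)))\<^sup>2
            \<le> (\<Prod>j=1..l. gamma v R j) * (norm (oproj R (x0 - xs)))\<^sup>2)
    \<and> (\<forall>k. tau v R (Lk v R k) \<noteq> \<infinity> \<longrightarrow>
          (norm (x k - xs - oproj N (x0 - xs)))\<^sup>2
            \<le> (\<Prod>j=1..Lk v R k. gamma v R j) * (norm (oproj R (x0 - xs)))\<^sup>2))"
proof -
  interpret prob_space M by (rule assms(1))
  let ?R = "Rsp M A w"
  let ?N = "Nsp M A w"
  have "\<forall>l. AE \<omega> in M. \<omega> \<in> {\<omega> \<in> space M. transpose A *v ws l \<omega> \<in> ?R}"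
    using assms(5) by (intro allI AE_prob_1) simp
  then have "AE \<omega> in M. \<forall>l. \<omega> \<in> {\<omega> \<in> space M. transpose A *v ws l \<omega> \<in> ?R}"
    by (subst AE_all_countable)
  then show ?thesis
  proof (rule eventually_mono)
    fix \<omega> assume om: "\<forall>l. \<omega> \<in> {\<omega> \<in> space M. transpose A *v ws l \<omega> \<in> ?R}"
    show "(\<forall>k. transpose A *v ws k \<omega> \<noteq> 0) \<longrightarrow>
    (let v = (\<lambda>k. transpose A *v ws k \<omega>); R = Rsp M A w; N = Nsp M A w;
         x = kacz A b (\<lambda>k. ws k \<omega>) x0 in
      (\<forall>l\<ge>1. tau v R l \<noteq> \<infinity> \<longrightarrow> 0 \<le> gamma v R l \<and> gamma v R l < 1)
    \<and> (\<forall>l t. tau v R l = enat t \<longrightarrow>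
          (norm (x (t + 1) - xs - oproj N (x0 - xs)))\<^sup>2
            \<le> (\<Prod>j=1..l. gamma v R j) * (norm (oproj R (x0 - xs)))\<^sup>2)
    \<and> (\<forall>k. tau v R (Lk v R k) \<noteq> \<infinity> \<longrightarrow>
          (norm (x k - xs - oproj N (x0 - xs)))\<^sup>2
            \<le> (\<Prod>j=1..Lk v R k. gamma v R j) * (norm (oproj R (x0 - xs)))\<^sup>2))"
    proof (intro impI)
      assume nz: "\<forall>k. transpose A *v ws k \<omega> \<noteq> 0"
      define v where "v = (\<lambda>k. transpose A *v ws k \<omega>)"
      define x where "x = kacz A b (\<lambda>k. ws k \<omega>) x0"
      have vR: "\<And>k. v k \<in> ?R" using om unfolding v_def by auto
      have subN: "subspace ?N" unfolding Nsp_def by (rule subspace_span)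
      have subR: "subspace ?R" unfolding Rsp_def by (rule subspace_orth_comp)
      obtain y z where yz: "y \<in> span ?N" "\<And>w'. w' \<in> span ?N \<Longrightarrow> orthogonal z w'" "x0 - xs = y + z"
        using orthogonal_subspace_decomp_exists by blast
      have yN: "y \<in> ?N" using yz(1) subN by (metis span_eq_iff)
      have zR: "z \<in> ?R" unfolding Rsp_def orth_comp_def
        using yz(2) span_base by (auto simp: orthogonal_def)
      have pN: "oproj ?N (x0 - xs) = y"
      proof (rule oproj_eq[OF subN yN])
        fix n assume "n \<in> ?N"
        then show "(x0 - xs - y) \<bullet> n = 0" using yz(2)[of n] yz(3) span_base
          by (auto simp: orthogonal_def)
      qed
      have Ry: "\<And>r. r \<in> ?R \<Longrightarrow> r \<bullet> y = 0" using yN unfolding Rsp_def orth_comp_def by blast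
      have pR: "oproj ?R (x0 - xs) = z"
      proof (rule oproj_eq[OF subR zR])
        fix r assume "r \<in> ?R"
        then show "(x0 - xs - z) \<bullet> r = 0" using Ry[of r] yz(3) by (simp add: inner_commute)
      qed
      define d where "d = (\<lambda>k. x k - xs - y)"
      have d0: "d 0 = z" unfolding d_def x_def using yz(3) by (simp add: algebra_simps)
      have dS: "d (Suc k) = stp (v k) (d k)" for k
      proof -
        have "v k \<bullet> (x k - xs) = v k \<bullet> d k + v k \<bullet> y" unfolding d_def by (simp add: inner_diff_right)
        also have "v k \<bullet> y = 0" using Ry[OF vR] .
        finally have e: "v k \<bullet> (x k - xs) = v k \<bullet> d k" by simp
        have ks: "x (Suc k) - xs - y = (x k - xs - y) - ((v k \<bullet> (x k - xs)) / (norm (v k))\<^sup>2) *\<^sub>R v k"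
          unfolding x_def v_def using kacz_step[of A xs "\<lambda>k. ws k \<omega>" x0 k y] unfolding assms(2) .
        have dk: "\<And>k. d k = x k - xs - y" by (simp add: d_def)
        show ?thesis using ks unfolding e dk[symmetric] stp_def .
      qed
      interpret ds: detsetting v ?R d
        by unfold_locales (use nz v_def vR subR d0 zR dS in auto)
      have P1: "\<forall>l\<ge>1. tau v ?R l \<noteq> \<infinity> \<longrightarrow> 0 \<le> gamma v ?R l \<and> gamma v ?R l < 1"
        by (rule ds.part1)
      have P2: "\<forall>l t. tau v ?R l = enat t \<longrightarrow>
          (norm (x (t + 1) - xs - oproj ?N (x0 - xs)))\<^sup>2
            \<le> (\<Prod>j=1..l. gamma v ?R j) * (norm (oproj ?R (x0 - xs)))\<^sup>2"
        using ds.part2 unfolding pN pR d_def[symmetric] d0[symmetric] by (simp add: d_def)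
      have P3: "\<forall>k. tau v ?R (Lk v ?R k) \<noteq> \<infinity> \<longrightarrow>
          (norm (x k - xs - oproj ?N (x0 - xs)))\<^sup>2
            \<le> (\<Prod>j=1..Lk v ?R k. gamma v ?R j) * (norm (oproj ?R (x0 - xs)))\<^sup>2"
        using ds.part3 unfolding pN pR d0[symmetric] by (simp add: d_def)
      show "let v = (\<lambda>k. transpose A *v ws k \<omega>); R = Rsp M A w; N = Nsp M A w;
         x = kacz A b (\<lambda>k. ws k \<omega>) x0 in
      (\<forall>l\<ge>1. tau v R l \<noteq> \<infinity> \<longrightarrow> 0 \<le> gamma v R l \<and> gamma v R l < 1)
    \<and> (\<forall>l t. tau v R l = enat t \<longrightarrow>
          (norm (x (t + 1) - xs - oproj N (x0 - xs)))\<^sup>2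
            \<le> (\<Prod>j=1..l. gamma v R j) * (norm (oproj R (x0 - xs)))\<^sup>2)
    \<and> (\<forall>k. tau v R (Lk v R k) \<noteq> \<infinity> \<longrightarrow>
          (norm (x k - xs - oproj N (x0 - xs)))\<^sup>2
            \<le> (\<Prod>j=1..Lk v R k. gamma v R j) * (norm (oproj R (x0 - xs)))\<^sup>2)"
        unfolding Let_def v_def[symmetric] x_def[symmetric] using P1 P2 P3 by blast
    qed
  qed
qed


end
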